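(* Let $\mathcal{A}\in\mathbb{R}^{m\times m\times n}$ be $(1,2)$-symmetric and nonnegative with $$\mathcal{A}=\begin{pmatrix}\mathcal{A}_1&0\\0&\mathcal{A}_2\end{pmatrix},\qquad \mathcal{A}_i\in\mathbb{R}^{m_i\times m_i\times n},\ i=1,2,\quad m_1+m_2=m,$$ where $\mathcal{A}_1$ and $\mathcal{A}_2$ are irreducible. For a $(1,2)$-symmetric tensor $\mathcal{B}\in\mathbb{R}^{k\times k\times n}$ let $$\varphi(\mathcal{B})=\min\{\|\mathcal{B}-(X,X,Z)\cdot\mathcal{H}\|^2:\ X\in\mathbb{R}^{k\times 2},X^TX=I_2,\ Z\in\mathbb{R}^{n\times 2},Z^TZ=I_2,\ \mathcal{H}\in\mathbb{R}^{2\times2\times2}\}.$$ Assume $\varphi(\mathcal{A})<\varphi(\mathcal{A}_1)+\|\mathcal{A}_2\|^2$ and $\varphi(\mathcal{A})<\varphi(\mathcal{A}_2)+\|\mathcal{A}_1\|^2$, and that the solution $(U,U,W)$ of the $(1,2)$-symmetric best rank-$(2,2,2)$ approximation problem for $\mathcal{A}$, with core $\mathcal{F}=\mathcal{A}\cdot(U,U,W)$, is unique. Then a representative of the solution satisfies $$U=\begin{pmatrix}u_1&0\\0&u_2\end{pmatrix},\qquad u_1\in\mathbb{R}^{m_1},\ u_2\in\mathbb{R}^{m_2},$$ and all 3-slices $\mathcal{F}(:,:,k)$ of the corresponding core tensor are diagonal $2\times2$ matrices. The corresponding result holds for the best rank-$(2,2,1)$ approximation (with $W$ replaced by a single unit vector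 $w$ and $Z\in\mathbb{R}^{n\times1}$, $\mathcal{H}\in\mathbb{R}^{2\times2\times1}$ in the definition of $\varphi$).
   Context: A tensor $\mathcal{A}\in\mathbb{R}^{m\times m\times n}$ is $(1,2)$-symmetric if $\mathcal{A}(i,j,k)=\mathcal{A}(j,i,k)$ for all $i,j,k$. It is (1,2)-reducible if there exist a nonempty proper subset $I\subset\{1,\dots,m\}$ and a nonempty $K\subseteq\{1,\dots,n\}$ with $a_{ijk}=a_{jik}=0$ for all $i\in I,j\notin I,k\in K$; 3-reducible if $a_{ijk}=0$ for all $i,j\in I$, $k\in K$; reducible if either holds; irreducible otherwise. Multilinear multiplication: $(X,Y,Z)\cdot\mathcal{H}$ has entries $\sum_{\alpha,\beta,\gamma}x_{i\alpha}y_{j\beta}z_{k\gamma}h_{\alpha\beta\gamma}$, and $\mathcal{A}\cdot(X,Y,Z):=(X^T,Y^T,Z^T)\cdot\mathcal{A}$. Norm is Frobenius. The $(1,2)$-symmetric best rank-$(r_1,r_1,r_3)$ approximation problem is $\max\|\mathcal{A}\cdot(X,X,Z)\|$ over $X^TX=I_{r_1}$, $Z^TZ=I_{r_3}$ (equivalently minimizing $\|\mathcal{A}-(X,X,Z)\cdot\mathcal{H}\|$), with solution $(U,U,W)$ and core $\mathcal{F}=\mathcal{A}\cdot(U,U,W)$. Solutions are equivalence classes under $(U,U,W)\mapsto(UQ_1,UQ_1,WQ_3)$, $Q_1,Q_3$ orthogonal; uniqueness means uniqueness of the class. *)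

theory Defs
  imports "HOL-Analysis.Analysis"
begin

text \<open>A real tensor of size p x q x s is a function
  nat => nat => nat => real, of which only the entries with indices
  i < p, j < q, k < s are relevant (indices start at 0). A real p x r matrix
  is a function nat => nat => real, of which only the entries i < p, a < r
  are relevant.\<close>

type_synonym tensor3 = "nat \<Rightarrow> nat \<Rightarrow> nat \<Rightarrow> real"
type_synonym matr = "nat \<Rightarrow> nat \<Rightarrow> real"

definition tnorm :: "nat \<Rightarrow> nat \<Rightarrow> nat \<Rightarrow> tensor3 \<Rightarrow> real" where
  "tnorm p q s T = sqrt (\<Sum>i<p. \<Sum>j<q. \<Sum>k<s. (T i j k)\<^sup>2)"

definition sym12 :: "nat \<Rightarrow> nat \<Rightarrow> tensor3 \<Rightarrow> bool" where
  "sym12 m n A \<longleftrightarrow> (\<forall>i<m. \<forall>j<m. \<forall>k<n. A i j k = A j i k)"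

definition nonneg_tensor :: "nat \<Rightarrow> nat \<Rightarrow> tensor3 \<Rightarrow> bool" where
  "nonneg_tensor m n A \<longleftrightarrow> (\<forall>i<m. \<forall>j<m. \<forall>k<n. 0 \<le> A i j k)"

definition reducible12 :: "nat \<Rightarrow> nat \<Rightarrow> tensor3 \<Rightarrow> bool" where
  "reducible12 m n A \<longleftrightarrow>
     (\<exists>I K. I \<noteq> {} \<and> I \<subset> {..<m} \<and> K \<noteq> {} \<and> K \<subseteq> {..<n} \<and>
        (\<forall>i\<in>I. \<forall>j\<in>{..<m} - I. \<forall>k\<in>K. A i j k = 0 \<and> A j i k = 0))"

definition reducible3 :: "nat \<Rightarrow> nat \<Rightarrow> tensor3 \<Rightarrow> bool" where
  "reducible3 m n A \<longleftrightarrow>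
     (\<exists>I K. I \<noteq> {} \<and> I \<subset> {..<m} \<and> K \<noteq> {} \<and> K \<subseteq> {..<n} \<and>
        (\<forall>i\<in>I. \<forall>j\<in>I. \<forall>k\<in>K. A i j k = 0))"

definition reducible_tensor :: "nat \<Rightarrow> nat \<Rightarrow> tensor3 \<Rightarrow> bool" where
  "reducible_tensor m n A \<longleftrightarrow> reducible12 m n A \<or> reducible3 m n A"

definition irreducible_tensor :: "nat \<Rightarrow> nat \<Rightarrow> tensor3 \<Rightarrow> bool" where
  "irreducible_tensor m n A \<longleftrightarrow> \<not> reducible_tensor m n A"

definition blockdiag :: "nat \<Rightarrow> tensor3 \<Rightarrow> tensor3 \<Rightarrow> tensor3" where
  "blockdiag m1 A1 A2 = (\<lambda>i j k.
      if i < m1 \<and> j < m1 then A1 i j k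
      else if m1 \<le> i \<and> m1 \<le> j then A2 (i - m1) (j - m1) k
      else 0)"

definition orthonormal_cols :: "nat \<Rightarrow> nat \<Rightarrow> matr \<Rightarrow> bool" where
  "orthonormal_cols p r X \<longleftrightarrow>
     (\<forall>a<r. \<forall>b<r. (\<Sum>i<p. X i a * X i b) = (if a = b then 1 else 0))"

definition mlmult :: "nat \<Rightarrow> nat \<Rightarrow> nat \<Rightarrow> matr \<Rightarrow> matr \<Rightarrow> matr \<Rightarrow> tensor3 \<Rightarrow> tensor3" where
  "mlmult r1 r2 r3 X Y Z H = (\<lambda>i j k.
      \<Sum>\<alpha><r1. \<Sum>\<beta><r2. \<Sum>\<gamma><r3. X i \<alpha> * Y j \<beta> * Z k \<gamma> * H \<alpha> \<beta> \<gamma>)"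

definition tmult :: "nat \<Rightarrow> nat \<Rightarrow> nat \<Rightarrow> tensor3 \<Rightarrow> matr \<Rightarrow> matr \<Rightarrow> matr \<Rightarrow> tensor3" where
  "tmult p1 p2 p3 A X Y Z = (\<lambda>a b c.
      \<Sum>i<p1. \<Sum>j<p2. \<Sum>k<p3. X i a * Y j b * Z k c * A i j k)"

text \<open>phi(B) for a k x k x n tensor B and rank (2,2,r3):
  min of ||B - (X,X,Z).H||^2 over X^T X = I_2, Z^T Z = I_r3, H of size 2 x 2 x r3
  (the minimum exists; it is written as an infimum).\<close>
definition phi :: "nat \<Rightarrow> nat \<Rightarrow> nat \<Rightarrow> tensor3 \<Rightarrow> real" where
  "phi r3 k n B = Inf {(tnorm k k n (\<lambda>i j l. B i j l - mlmult 2 2 r3 X X Z H i j l))\<^sup>2 | X Z H.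
        orthonormal_cols k 2 X \<and> orthonormal_cols n r3 Z}"

text \<open>(U,U,W) solves the (1,2)-symmetric best rank-(2,2,r3) approximation problem
  for the m x m x n tensor A: it maximizes ||A.(X,X,Z)|| over orthonormal X, Z.\<close>
definition best_sol :: "nat \<Rightarrow> nat \<Rightarrow> nat \<Rightarrow> tensor3 \<Rightarrow> matr \<Rightarrow> matr \<Rightarrow> bool" where
  "best_sol r3 m n A U W \<longleftrightarrow>
     orthonormal_cols m 2 U \<and> orthonormal_cols n r3 W \<and>
     (\<forall>X Z. orthonormal_cols m 2 X \<and> orthonormal_cols n r3 Z \<longrightarrow>
        tnorm 2 2 r3 (tmult m m n A X X Z) \<le> tnorm 2 2 r3 (tmult m m n A U U W))"

definition sol_equiv :: "nat \<Rightarrow> nat \<Rightarrow> nat \<Rightarrow> matr \<Rightarrow> matr \<Rightarrow> matr \<Rightarrow> matr \<Rightarrow> bool" where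
  "sol_equiv r3 m n U W U' W' \<longleftrightarrow>
     (\<exists>Q1 Q3. orthonormal_cols 2 2 Q1 \<and> orthonormal_cols r3 r3 Q3 \<and>
        (\<forall>i<m. \<forall>a<2. U' i a = (\<Sum>b<2. U i b * Q1 b a)) \<and>
        (\<forall>k<n. \<forall>c<r3. W' k c = (\<Sum>d<r3. W k d * Q3 d c)))"

definition unique_sol :: "nat \<Rightarrow> nat \<Rightarrow> nat \<Rightarrow> tensor3 \<Rightarrow> bool" where
  "unique_sol r3 m n A \<longleftrightarrow>
     (\<exists>U W. best_sol r3 m n A U W \<and>
        (\<forall>U' W'. best_sol r3 m n A U' W' \<longrightarrow> sol_equiv r3 m n U W U' W'))"

end

theory Submission
  imports Defs
begin

lemma mv2: "(\<Sum>i\<in>I. \<Sum>a\<in>A. \<Sum>b\<in>B. g i a b) = (\<Sum>a\<in>A. \<Sum>b\<in>B. \<Sum>i\<in>I. (g i a b::real))"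
  by (subst sum.swap) (rule sum.cong[OF refl], rule sum.swap)
lemma mv3: "(\<Sum>i\<in>I. \<Sum>a\<in>A. \<Sum>b\<in>B. \<Sum>c\<in>C. g i a b c) = (\<Sum>a\<in>A. \<Sum>b\<in>B. \<Sum>c\<in>C. \<Sum>i\<in>I. (g i a b c::real))"
  by (subst sum.swap) (rule sum.cong[OF refl], rule mv2)
lemma sw33: "(\<Sum>i\<in>I. \<Sum>j\<in>J. \<Sum>k\<in>K. \<Sum>a\<in>A. \<Sum>b\<in>B. \<Sum>c\<in>C. g i j k a b c) = (\<Sum>a\<in>A. \<Sum>b\<in>B. \<Sum>c\<in>C. \<Sum>i\<in>I. \<Sum>j\<in>J. \<Sum>k\<in>K. (g i j k a b c::real))"
proof -
  have "(\<Sum>i\<in>I. \<Sum>j\<in>J. \<Sum>k\<in>K. \<Sum>a\<in>A. \<Sum>b\<in>B. \<Sum>c\<in>C. g i j k a b c) = (\<Sum>i\<in>I. \<Sum>j\<in>J. \<Sum>a\<in>A. \<Sum>b\<in>B. \<Sum>c\<in>C. \<Sum>k\<in>K. g i j k a b c)"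
    by (intro sum.cong refl mv3)
  also have "\<dots> = (\<Sum>i\<in>I. \<Sum>a\<in>A. \<Sum>b\<in>B. \<Sum>c\<in>C. \<Sum>j\<in>J. \<Sum>k\<in>K. g i j k a b c)"
    by (intro sum.cong refl mv3)
  also have "\<dots> = (\<Sum>a\<in>A. \<Sum>b\<in>B. \<Sum>c\<in>C. \<Sum>i\<in>I. \<Sum>j\<in>J. \<Sum>k\<in>K. g i j k a b c)"
    by (rule mv3)
  finally show ?thesis .
qed

lemma PL: "(\<Sum>i<p. \<Sum>j<q. \<Sum>k<s. B i j k * mlmult r1 r2 r3 X Y Z H i j k) =
   (\<Sum>a<r1. \<Sum>b<r2. \<Sum>c<r3. H a b c * tmult p q s B X Y Z a b c)"
  unfolding mlmult_def tmult_def
  apply (simp add: sum_distrib_left sum_distrib_right mult_ac)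
  apply (subst sw33) apply (simp add: mult_ac)
  done


lemma TM:
  assumes X: "orthonormal_cols p r1 X" and Y: "orthonormal_cols q r2 Y" and Z: "orthonormal_cols s r3 Z"
    and abc: "a < r1" "b < r2" "c < r3"
  shows "tmult p q s (mlmult r1 r2 r3 X Y Z H) X Y Z a b c = H a b c"
proof -
  have "tmult p q s (mlmult r1 r2 r3 X Y Z H) X Y Z a b c =
     (\<Sum>i<p. \<Sum>j<q. \<Sum>k<s. (X i a * Y j b * Z k c) * mlmult r1 r2 r3 X Y Z H i j k)"
    unfolding tmult_def by (simp add: mult_ac)
  also have "\<dots> = (\<Sum>a'<r1. \<Sum>b'<r2. \<Sum>c'<r3. H a' b' c' *
      ((\<Sum>i<p. X i a' * X i a) * (\<Sum>j<q. Y j b' * Y j b) * (\<Sum>k<s. Z k c' * Z k c)))"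
    unfolding PL unfolding tmult_def
    apply (simp add: sum_distrib_left sum_distrib_right mult_ac)
    apply (rule sum.cong[OF refl], rule sum.cong[OF refl], rule sum.cong[OF refl])
    apply (rule sum.swap)
    done
  also have "\<dots> = (\<Sum>a'<r1. \<Sum>b'<r2. \<Sum>c'<r3.
      (if c' = c then (if b' = b then (if a' = a then H a' b' c' else 0) else 0) else 0))"
    using X Y Z abc unfolding orthonormal_cols_def
    by (intro sum.cong refl) auto
  also have "\<dots> = H a b c"
    using abc by (simp add: sum.delta')
  finally show ?thesis .
qed

definition ss :: "nat \<Rightarrow> nat \<Rightarrow> nat \<Rightarrow> tensor3 \<Rightarrow> real" where
  "ss p q s T = (\<Sum>i<p. \<Sum>j<q. \<Sum>k<s. (T i j k)\<^sup>2)"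

lemma ss_nonneg: "0 \<le> ss p q s T"
  unfolding ss_def by (intro sum_nonneg) auto

lemma tnorm_sq: "(tnorm p q s T)\<^sup>2 = ss p q s T"
  unfolding tnorm_def ss_def[symmetric] using ss_nonneg by simp

lemma tnorm_ss_le: "tnorm p q s T \<le> tnorm p' q' s' T' \<longleftrightarrow> ss p q s T \<le> ss p' q' s' T'"
  unfolding tnorm_def ss_def[symmetric] by simp

lemma sq3: "(\<Sum>i<p. \<Sum>j<q. \<Sum>k<s. ((f i j k - g i j k)::real)\<^sup>2) =
   (\<Sum>i<p. \<Sum>j<q. \<Sum>k<s. (f i j k)\<^sup>2) - 2 * (\<Sum>i<p. \<Sum>j<q. \<Sum>k<s. f i j k * g i j k)
   + (\<Sum>i<p. \<Sum>j<q. \<Sum>k<s. (g i j k)\<^sup>2)"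
  by (simp add: power2_diff sum.distrib sum_subtractf sum_distrib_left mult.assoc)

lemma ident:
  assumes X: "orthonormal_cols p 2 X" and Z: "orthonormal_cols s r Z"
  shows "ss p p s (\<lambda>i j l. B i j l - mlmult 2 2 r X X Z H i j l) =
     ss p p s B - 2 * (\<Sum>a<2. \<Sum>b<2. \<Sum>c<r. H a b c * tmult p p s B X X Z a b c) + ss 2 2 r H"
proof -
  have 1: "(\<Sum>i<p. \<Sum>j<p. \<Sum>k<s. mlmult 2 2 r X X Z H i j k * mlmult 2 2 r X X Z H i j k)
     = (\<Sum>a<2. \<Sum>b<2. \<Sum>c<r. H a b c * H a b c)"
    unfolding PL using TM[OF X X Z] by (intro sum.cong refl) auto
  show ?thesis
    unfolding ss_def sq3 PL
    using 1 by (simp add: power2_eq_square)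
qed

lemma L1:
  assumes X: "orthonormal_cols p 2 X" and Z: "orthonormal_cols s r Z"
  shows "ss p p s (\<lambda>i j l. B i j l - mlmult 2 2 r X X Z H i j l) \<ge>
     ss p p s B - ss 2 2 r (tmult p p s B X X Z)"
proof -
  let ?G = "tmult p p s B X X Z"
  have "0 \<le> ss 2 2 r (\<lambda>a b c. H a b c - ?G a b c)" by (rule ss_nonneg)
  also have "ss 2 2 r (\<lambda>a b c. H a b c - ?G a b c) = ss 2 2 r H - 2 * (\<Sum>a<2. \<Sum>b<2. \<Sum>c<r. H a b c * ?G a b c) + ss 2 2 r ?G"
    unfolding ss_def sq3 ..
  finally show ?thesis unfolding ident[OF X Z] by simp
qed

lemma L2:
  assumes X: "orthonormal_cols p 2 X" and Z: "orthonormal_cols s r Z"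
  shows "ss p p s (\<lambda>i j l. B i j l - mlmult 2 2 r X X Z (tmult p p s B X X Z) i j l) =
     ss p p s B - ss 2 2 r (tmult p p s B X X Z)"
  unfolding ident[OF X Z] by (simp add: ss_def power2_eq_square)

lemma phi_upper:
  assumes X: "orthonormal_cols k 2 X" and Z: "orthonormal_cols n r Z"
  shows "phi r k n B \<le> ss k k n B - ss 2 2 r (tmult k k n B X X Z)"
proof -
  have "phi r k n B \<le> (tnorm k k n (\<lambda>i j l. B i j l - mlmult 2 2 r X X Z (tmult k k n B X X Z) i j l))\<^sup>2"
    unfolding phi_def
    by (rule cInf_lower) (use X Z in \<open>auto intro: bdd_belowI[where m=0]\<close>)
  then show ?thesis unfolding tnorm_sq L2[OF X Z] .
qed

lemma phi_lower:
  assumes b: "best_sol r m n A U W"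
  shows "phi r m n A \<ge> ss m m n A - ss 2 2 r (tmult m m n A U U W)"
  unfolding phi_def
proof (rule cInf_greatest)
  show "{(tnorm m m n (\<lambda>i j l. A i j l - mlmult 2 2 r X X Z H i j l))\<^sup>2 | X Z H.
        orthonormal_cols m 2 X \<and> orthonormal_cols n r Z} \<noteq> {}"
    using b unfolding best_sol_def by blast
next
  fix x assume "x \<in> {(tnorm m m n (\<lambda>i j l. A i j l - mlmult 2 2 r X X Z H i j l))\<^sup>2 | X Z H.
        orthonormal_cols m 2 X \<and> orthonormal_cols n r Z}"
  then obtain X Z H where x: "x = (tnorm m m n (\<lambda>i j l. A i j l - mlmult 2 2 r X X Z H i j l))\<^sup>2"
    and X: "orthonormal_cols m 2 X" and Z: "orthonormal_cols n r Z" by blast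
  have "ss 2 2 r (tmult m m n A X X Z) \<le> ss 2 2 r (tmult m m n A U U W)"
    using b X Z unfolding best_sol_def tnorm_ss_le by blast
  then show "ss m m n A - ss 2 2 r (tmult m m n A U U W) \<le> x"
    unfolding x tnorm_sq using L1[OF X Z, of A H] by linarith
qed


lemma sum_restrict_shift:
  fixes f :: "nat \<Rightarrow> real"
  assumes "d + p \<le> m" "\<And>i. i < m \<Longrightarrow> \<not> (d \<le> i \<and> i < d + p) \<Longrightarrow> f i = 0"
  shows "(\<Sum>i<m. f i) = (\<Sum>i<p. f (i + d))"
proof -
  have "(\<Sum>i<m. f i) = (\<Sum>i\<in>{d..<d+p}. f i)"
    by (rule sum.mono_neutral_right) (use assms in auto)
  also have "\<dots> = (\<Sum>i\<in>{0+d..<p+d}. f i)" by (simp add: add.commute)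
  also have "\<dots> = (\<Sum>i\<in>{0..<p}. f (i + d))" by (rule sum.shift_bounds_nat_ivl)
  finally show ?thesis by (simp add: atLeast0LessThan)
qed

lemma sum_split_add:
  fixes f :: "nat \<Rightarrow> real"
  shows "(\<Sum>i<a+b. f i) = (\<Sum>i<a. f i) + (\<Sum>i<b. f (i + a))"
  by (induct b) (simp_all add: ac_simps)

lemma tmult_restrict:
  assumes dp: "d + p \<le> m"
    and AB: "\<And>i j k. i < m \<Longrightarrow> j < m \<Longrightarrow> k < n \<Longrightarrow> d \<le> i \<Longrightarrow> i < d + p \<Longrightarrow> d \<le> j \<Longrightarrow> j < d + p
       \<Longrightarrow> A i j k = B (i - d) (j - d) k"
    and supp: "\<And>i a. i < m \<Longrightarrow> a < 2 \<Longrightarrow> \<not> (d \<le> i \<and> i < d + p) \<Longrightarrow> U i a = 0"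
    and ab: "a < 2" "b < 2"
  shows "tmult m m n A U U W a b c = tmult p p n B (\<lambda>i a. U (i + d) a) (\<lambda>i a. U (i + d) a) W a b c"
proof -
  have "(\<Sum>i<m. \<Sum>j<m. \<Sum>k<n. U i a * U j b * W k c * A i j k) =
     (\<Sum>i<p. \<Sum>j<m. \<Sum>k<n. U (i + d) a * U j b * W k c * A (i + d) j k)"
    by (rule sum_restrict_shift[OF dp]) (use supp ab in simp)
  also have "\<dots> = (\<Sum>i<p. \<Sum>j<p. \<Sum>k<n. U (i + d) a * U (j + d) b * W k c * B i j k)"
  proof (rule sum.cong[OF refl])
    fix i assume i: "i \<in> {..<p}"
    have "(\<Sum>j<m. \<Sum>k<n. U (i + d) a * U j b * W k c * A (i + d) j k) =
       (\<Sum>j<p. \<Sum>k<n. U (i + d) a * U (j + d) b * W k c * A (i + d) (j + d) k)"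
      by (rule sum_restrict_shift[OF dp]) (use supp ab in simp)
    also have "\<dots> = (\<Sum>j<p. \<Sum>k<n. U (i + d) a * U (j + d) b * W k c * B i j k)"
      using i dp by (intro sum.cong refl) (simp add: AB)
    finally show "(\<Sum>j<m. \<Sum>k<n. U (i + d) a * U j b * W k c * A (i + d) j k) =
       (\<Sum>j<p. \<Sum>k<n. U (i + d) a * U (j + d) b * W k c * B i j k)" .
  qed
  finally show ?thesis unfolding tmult_def .
qed

lemma orth_restrict:
  assumes dp: "d + p \<le> m" and o: "orthonormal_cols m 2 U"
    and supp: "\<And>i a. i < m \<Longrightarrow> a < 2 \<Longrightarrow> \<not> (d \<le> i \<and> i < d + p) \<Longrightarrow> U i a = 0"
  shows "orthonormal_cols p 2 (\<lambda>i a. U (i + d) a)"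
  unfolding orthonormal_cols_def
proof (intro allI impI)
  fix a b :: nat assume ab: "a < 2" "b < 2"
  have "(\<Sum>i<m. U i a * U i b) = (\<Sum>i<p. U (i + d) a * U (i + d) b)"
    by (rule sum_restrict_shift[OF dp]) (use supp ab in simp)
  then show "(\<Sum>i<p. U (i + d) a * U (i + d) b) = (if a = b then 1 else 0)"
    using o ab unfolding orthonormal_cols_def by simp
qed

lemma conc:
  assumes best: "best_sol r m n A U W" and dp: "d + p \<le> m"
    and AB: "\<And>i j k. i < m \<Longrightarrow> j < m \<Longrightarrow> k < n \<Longrightarrow> d \<le> i \<Longrightarrow> i < d + p \<Longrightarrow> d \<le> j \<Longrightarrow> j < d + p
       \<Longrightarrow> A i j k = B (i - d) (j - d) k"
    and supp: "\<And>i a. i < m \<Longrightarrow> a < 2 \<Longrightarrow> \<not> (d \<le> i \<and> i < d + p) \<Longrightarrow> U i a = 0"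
  shows "phi r m n A \<ge> ss m m n A - ss p p n B + phi r p n B"
proof -
  let ?U = "\<lambda>i a. U (i + d) a"
  have oU: "orthonormal_cols m 2 U" and oW: "orthonormal_cols n r W" using best unfolding best_sol_def by auto
  have tr: "\<And>a b c. a < 2 \<Longrightarrow> b < 2 \<Longrightarrow> tmult m m n A U U W a b c = tmult p p n B ?U ?U W a b c"
    using tmult_restrict[of d p m n A B U] dp AB supp by blast
  have eq: "ss 2 2 r (tmult m m n A U U W) = ss 2 2 r (tmult p p n B ?U ?U W)"
    unfolding ss_def by (intro sum.cong refl) (simp add: tr)
  have "phi r p n B \<le> ss p p n B - ss 2 2 r (tmult p p n B ?U ?U W)"
    by (rule phi_upper[OF orth_restrict[OF dp oU supp] oW])
  with phi_lower[OF best] eq show ?thesis by linarith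
qed

lemma ss_block:
  assumes "m = m1 + m2" and block: "\<forall>i<m. \<forall>j<m. \<forall>k<n. A i j k = blockdiag m1 A1 A2 i j k"
  shows "ss m m n A = ss m1 m1 n A1 + ss m2 m2 n A2"
proof -
  have "ss m m n A = ss m m n (blockdiag m1 A1 A2)"
    unfolding ss_def using block by (intro sum.cong refl) auto
  also have "\<dots> = ss m1 m1 n A1 + ss m2 m2 n A2"
    unfolding ss_def assms(1) sum_split_add by (simp add: blockdiag_def)
  finally show ?thesis .
qed


definition core :: "nat \<Rightarrow> nat \<Rightarrow> tensor3 \<Rightarrow> matr \<Rightarrow> (nat \<Rightarrow> real) \<Rightarrow> (nat \<Rightarrow> real) \<Rightarrow> nat \<Rightarrow> real" where
  "core m n A W x y c = (\<Sum>i<m. \<Sum>j<m. \<Sum>k<n. x i * y j * W k c * A i j k)"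

lemma tmult_core: "tmult m m n A X Y W a b c = core m n A W (\<lambda>i. X i a) (\<lambda>i. Y i b) c"
  unfolding tmult_def core_def ..

lemma core_lin1: "core m n A W (\<lambda>i. \<alpha> * x i + \<beta> * x' i) y c = \<alpha> * core m n A W x y c + \<beta> * core m n A W x' y c"
  unfolding core_def by (simp add: algebra_simps sum.distrib sum_distrib_left)

lemma core_lin2: "core m n A W x (\<lambda>i. \<alpha> * y i + \<beta> * y' i) c = \<alpha> * core m n A W x y c + \<beta> * core m n A W x y' c"
  unfolding core_def by (simp add: algebra_simps sum.distrib sum_distrib_left)

lemma tnorm_ss: "tnorm p q s T = sqrt (ss p q s T)"
  unfolding tnorm_def ss_def ..

lemma sum2: "(\<Sum>a<(2::nat). f a) = f 0 + (f 1 :: real)"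
  by (simp add: numeral_2_eq_2)

lemma rot_identity:
  fixes c s x y z w :: real
  assumes "c\<^sup>2 + s\<^sup>2 = 1"
  shows "(c * (c * x + s * y) + s * (c * z + s * w))\<^sup>2 + (c * (- s * x + c * y) + s * (- s * z + c * w))\<^sup>2
    + ((- s) * (c * x + s * y) + c * (c * z + s * w))\<^sup>2 + ((- s) * (- s * x + c * y) + c * (- s * z + c * w))\<^sup>2
    = x\<^sup>2 + y\<^sup>2 + z\<^sup>2 + w\<^sup>2"
proof -
  have "(c * (c * x + s * y) + s * (c * z + s * w))\<^sup>2 + (c * (- s * x + c * y) + s * (- s * z + c * w))\<^sup>2
    + ((- s) * (c * x + s * y) + c * (c * z + s * w))\<^sup>2 + ((- s) * (- s * x + c * y) + c * (- s * z + c * w))\<^sup>2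
    = (c\<^sup>2 + s\<^sup>2)\<^sup>2 * (x\<^sup>2 + y\<^sup>2 + z\<^sup>2 + w\<^sup>2)" by algebra
  then show ?thesis using assms by simp
qed

lemma rot:
  fixes c s :: real
  assumes cs: "c\<^sup>2 + s\<^sup>2 = 1" and oU: "orthonormal_cols m 2 U"
    and U': "U' = (\<lambda>i a. if a = 0 then c * U i 0 + s * U i 1 else - s * U i 0 + c * U i 1)"
  shows "orthonormal_cols m 2 U'" and "ss 2 2 r (tmult m m n A U' U' W) = ss 2 2 r (tmult m m n A U U W)"
proof -
  have o: "(\<Sum>i<m. U i 0 * U i 0) = 1" "(\<Sum>i<m. U i 1 * U i 1) = 1" "(\<Sum>i<m. U i 0 * U i 1) = 0"
    "(\<Sum>i<m. U i 1 * U i 0) = 0"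
    using oU unfolding orthonormal_cols_def by auto
  have e: "\<And>\<alpha> \<beta> \<gamma> \<delta>. (\<Sum>i<m. (\<alpha> * U i 0 + \<beta> * U i 1) * (\<gamma> * U i 0 + \<delta> * U i 1)) = \<alpha> * \<gamma> + \<beta> * \<delta>"
  proof -
    fix \<alpha> \<beta> \<gamma> \<delta> :: real
    have "(\<Sum>i<m. (\<alpha> * U i 0 + \<beta> * U i 1) * (\<gamma> * U i 0 + \<delta> * U i 1)) =
      \<alpha> * \<gamma> * (\<Sum>i<m. U i 0 * U i 0) + \<alpha> * \<delta> * (\<Sum>i<m. U i 0 * U i 1) + \<beta> * \<gamma> * (\<Sum>i<m. U i 1 * U i 0)
      + \<beta> * \<delta> * (\<Sum>i<m. U i 1 * U i 1)"
      by (simp add: algebra_simps sum.distrib sum_distrib_left)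
    then show "(\<Sum>i<m. (\<alpha> * U i 0 + \<beta> * U i 1) * (\<gamma> * U i 0 + \<delta> * U i 1)) = \<alpha> * \<gamma> + \<beta> * \<delta>"
      using o by simp
  qed
  show "orthonormal_cols m 2 U'"
    unfolding orthonormal_cols_def
  proof (intro allI impI)
    fix a b :: nat assume "a < 2" "b < 2"
    then have "a = 0 \<or> a = 1" "b = 0 \<or> b = 1" by auto
    then show "(\<Sum>i<m. U' i a * U' i b) = (if a = b then 1 else 0)"
      using cs e[of c s c s] e[of c s "-s" c] e[of "-s" c c s] e[of "-s" c "-s" c]
      unfolding U' by (auto simp: power2_eq_square algebra_simps)
  qed
  let ?F = "tmult m m n A U U W"
  have h0: "(\<lambda>i. U' i 0) = (\<lambda>i. c * U i 0 + s * U i 1)" and h1: "(\<lambda>i. U' i 1) = (\<lambda>i. (- s) * U i 0 + c * U i 1)"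
    unfolding U' by auto
  have F': "tmult m m n A U' U' W 0 0 k = c * (c * ?F 0 0 k + s * ?F 0 1 k) + s * (c * ?F 1 0 k + s * ?F 1 1 k)"
    "tmult m m n A U' U' W 0 1 k = c * (- s * ?F 0 0 k + c * ?F 0 1 k) + s * (- s * ?F 1 0 k + c * ?F 1 1 k)"
    "tmult m m n A U' U' W 1 0 k = (- s) * (c * ?F 0 0 k + s * ?F 0 1 k) + c * (c * ?F 1 0 k + s * ?F 1 1 k)"
    "tmult m m n A U' U' W 1 1 k = (- s) * (- s * ?F 0 0 k + c * ?F 0 1 k) + c * (- s * ?F 1 0 k + c * ?F 1 1 k)"
    for k
    unfolding tmult_core h0 h1 core_lin1 core_lin2 by (simp_all add: algebra_simps)
  have sw: "\<And>T. ss 2 2 r T = (\<Sum>k<r. (T 0 0 k)\<^sup>2 + (T 0 1 k)\<^sup>2 + (T 1 0 k)\<^sup>2 + (T 1 1 k)\<^sup>2)"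
    unfolding ss_def sum2 by (simp add: sum.distrib)
  show "ss 2 2 r (tmult m m n A U' U' W) = ss 2 2 r (tmult m m n A U U W)"
    unfolding sw F' using rot_identity[OF cs] by simp
qed


theorem proposition5p2:
  fixes m1 m2 m n r3 :: nat and A A1 A2 :: tensor3
  assumes r3: "r3 = 1 \<or> r3 = 2"
    and dims: "m = m1 + m2" "2 \<le> m1" "2 \<le> m2" "r3 \<le> n"
    and sym: "sym12 m n A"
    and nonneg: "nonneg_tensor m n A"
    and block: "\<forall>i<m. \<forall>j<m. \<forall>k<n. A i j k = blockdiag m1 A1 A2 i j k"
    and irr1: "irreducible_tensor m1 n A1"
    and irr2: "irreducible_tensor m2 n A2"
    and ineq1: "phi r3 m n A < phi r3 m1 n A1 + (tnorm m2 m2 n A2)\<^sup>2"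
    and ineq2: "phi r3 m n A < phi r3 m2 n A2 + (tnorm m1 m1 n A1)\<^sup>2"
    and uniq: "unique_sol r3 m n A"
  shows "\<exists>U W. best_sol r3 m n A U W \<and>
           (\<forall>i<m1. U i 1 = 0) \<and> (\<forall>i. m1 \<le> i \<and> i < m \<longrightarrow> U i 0 = 0) \<and>
           (\<forall>c<r3. tmult m m n A U U W 0 1 c = 0 \<and> tmult m m n A U U W 1 0 c = 0)"
proof -
  obtain U W where best: "best_sol r3 m n A U W"
    and all: "\<forall>U' W'. best_sol r3 m n A U' W' \<longrightarrow> sol_equiv r3 m n U W U' W'"
    using uniq unfolding unique_sol_def by blast
  have oU: "orthonormal_cols m 2 U" and oW: "orthonormal_cols n r3 W"
    using best unfolding best_sol_def by auto
  define sg where "sg i = (if i < m1 then 1 else -1::real)" for i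
  define DU where "DU = (\<lambda>i a. sg i * U i a)"
  have A0: "A i j k = 0" if "i < m" "j < m" "k < n" "(i < m1) \<noteq> (j < m1)" for i j k
    using block that unfolding blockdiag_def by auto
  have bestD: "best_sol r3 m n A DU W"
  proof -
    have "(\<Sum>i<m. DU i a * DU i b) = (\<Sum>i<m. U i a * U i b)" for a b
      unfolding DU_def sg_def by (intro sum.cong refl) auto
    then have "orthonormal_cols m 2 DU"
      using oU unfolding orthonormal_cols_def by simp
    moreover have "tmult m m n A DU DU W = tmult m m n A U U W"
      unfolding tmult_def DU_def
    proof (intro ext sum.cong refl)
      fix a b c i j k assume "i \<in> {..<m}" "j \<in> {..<m}" "k \<in> {..<n}"
      then show "sg i * U i a * (sg j * U j b) * W k c * A i j k = U i a * U j b * W k c * A i j k"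
        using A0[of i j k] unfolding sg_def by auto
    qed
    ultimately show ?thesis using best unfolding best_sol_def by simp
  qed
  then obtain Q1 Q3 where oQ: "orthonormal_cols 2 2 Q1"
    and DUQ: "\<forall>i<m. \<forall>a<2. DU i a = (\<Sum>b<2. U i b * Q1 b a)"
    using all unfolding sol_equiv_def by blast
  have rel: "sg i * U i a = U i 0 * Q1 0 a + U i 1 * Q1 1 a" if "i < m" "a < 2" for i a
    using DUQ that unfolding DU_def sum2 by auto
  have o: "(\<Sum>i<m. U i 0 * U i 0) = 1" "(\<Sum>i<m. U i 1 * U i 1) = 1" "(\<Sum>i<m. U i 0 * U i 1) = 0"
    "(\<Sum>i<m. U i 1 * U i 0) = 0"
    using oU unfolding orthonormal_cols_def by auto
  have Qf: "(\<Sum>i<m. U i b * (sg i * U i a)) = Q1 b a" if "a < 2" "b < 2" for a b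
  proof -
    have "(\<Sum>i<m. U i b * (sg i * U i a)) = (\<Sum>i<m. U i b * (U i 0 * Q1 0 a + U i 1 * Q1 1 a))"
      using rel that by (intro sum.cong refl) auto
    also have "\<dots> = (\<Sum>i<m. U i b * U i 0) * Q1 0 a + (\<Sum>i<m. U i b * U i 1) * Q1 1 a"
      by (simp add: distrib_left sum.distrib sum_distrib_left sum_distrib_right mult_ac)
    also have "\<dots> = Q1 b a"
      using that o by (cases "b = 0") (auto simp: less_2_cases_iff)
    finally show ?thesis .
  qed
  have symQ: "Q1 1 0 = Q1 0 1"
  proof -
    have "Q1 1 0 = (\<Sum>i<m. U i 1 * (sg i * U i 0))" using Qf by simp
    also have "\<dots> = (\<Sum>i<m. U i 0 * (sg i * U i 1))" by (intro sum.cong refl) simp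
    also have "\<dots> = Q1 0 1" using Qf by simp
    finally show ?thesis .
  qed
  define p where "p = Q1 0 0"
  define q where "q = Q1 0 1"
  define r where "r = Q1 1 1"
  have pq: "p\<^sup>2 + q\<^sup>2 = 1" and qr: "q\<^sup>2 + r\<^sup>2 = 1" and pqr: "p * q + q * r = 0"
  proof -
    have Qo: "\<And>a b. a<2 \<Longrightarrow> b<2 \<Longrightarrow> Q1 0 a * Q1 0 b + Q1 1 a * Q1 1 b = (if a = b then 1 else 0)"
      using oQ by (simp add: orthonormal_cols_def sum2)
    show "p\<^sup>2 + q\<^sup>2 = 1" using Qo[of 0 0] symQ unfolding p_def q_def by (simp add: power2_eq_square)
    show "q\<^sup>2 + r\<^sup>2 = 1" using Qo[of 1 1] unfolding r_def q_def by (simp add: power2_eq_square)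
    show "p * q + q * r = 0" using Qo[of 0 1] symQ unfolding p_def q_def r_def by simp
  qed
  have rel0: "sg i * U i 0 = U i 0 * p + U i 1 * q" if "i < m" for i
    using rel[of i 0] that symQ unfolding p_def q_def by simp
  have rel1: "sg i * U i 1 = U i 0 * q + U i 1 * r" if "i < m" for i
    using rel[of i 1] that unfolding q_def r_def by simp
  show ?thesis
  proof (cases "p + r = 0")
    case False
    have "q * (p + r) = 0" using pqr by (simp add: algebra_simps)
    then have q0: "q = 0" using False by simp
    then have "p\<^sup>2 = 1" "r\<^sup>2 = 1" using pq qr by auto
    then have pr: "(p = 1 \<or> p = -1) \<and> (r = 1 \<or> r = -1)" by (simp add: power2_eq_1_iff)
    with False have "(p = 1 \<and> r = 1) \<or> (p = -1 \<and> r = -1)" by auto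
    then show ?thesis
    proof
      assume "p = 1 \<and> r = 1"
      then have supp: "U i a = 0" if "i < m" "a < 2" "\<not> (0 \<le> i \<and> i < 0 + m1)" for i a
        using rel0[of i] rel1[of i] that q0 unfolding sg_def by (auto simp: less_2_cases_iff)
      have AB: "A i j k = A1 (i - 0) (j - 0) k" if "i < m" "j < m" "k < n" "0 \<le> i" "i < 0 + m1"
        "0 \<le> j" "j < 0 + m1" for i j k
        using block that unfolding blockdiag_def by auto
      have "phi r3 m n A \<ge> ss m m n A - ss m1 m1 n A1 + phi r3 m1 n A1"
        by (rule conc[OF best _ AB supp]) (use dims in auto)
      then show ?thesis using ineq1 ss_block[OF dims(1) block] unfolding tnorm_sq by linarith
    next
      assume "p = -1 \<and> r = -1"
      then have supp: "U i a = 0" if "i < m" "a < 2" "\<not> (m1 \<le> i \<and> i < m1 + m2)" for i a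
        using rel0[of i] rel1[of i] that q0 dims unfolding sg_def by (auto simp: less_2_cases_iff)
      have AB: "A i j k = A2 (i - m1) (j - m1) k" if "i < m" "j < m" "k < n" "m1 \<le> i" "i < m1 + m2"
        "m1 \<le> j" "j < m1 + m2" for i j k
        using block that unfolding blockdiag_def by auto
      have "phi r3 m n A \<ge> ss m m n A - ss m2 m2 n A2 + phi r3 m2 n A2"
        by (rule conc[OF best _ AB supp]) (use dims in auto)
      then show ?thesis using ineq2 ss_block[OF dims(1) block] unfolding tnorm_sq by linarith
    qed
  next
    case True
    then have rp: "r = - p" by simp
    obtain c s :: real where cs: "c\<^sup>2 + s\<^sup>2 = 1" and e1: "p * c + q * s = c" and e2: "q * c - p * s = s"
    proof (cases "p = -1")
      case True
      then have "q = 0" using pq by simp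
      then show ?thesis using that[of 0 1] True by simp
    next
      case False
      have "p\<^sup>2 \<le> 1" using pq by (metis le_add_same_cancel1 zero_le_power2)
      then have "-1 \<le> p" using abs_le_square_iff[of p 1] by (simp add: abs_le_iff)
      with False have pp: "0 < 2 + 2 * p" by simp
      define N where "N = sqrt (2 + 2 * p)"
      have N: "0 < N" "N\<^sup>2 = 2 + 2 * p" using pp unfolding N_def by auto
      show ?thesis
      proof (rule that[of "(1 + p) / N" "q / N"])
        show "((1 + p) / N)\<^sup>2 + (q / N)\<^sup>2 = 1"
          using N pq pp by (simp add: power_divide add_divide_distrib[symmetric] power2_eq_square algebra_simps)
        show "p * ((1 + p) / N) + q * (q / N) = (1 + p) / N"
          using N pq by (simp add: field_simps power2_eq_square)
        show "q * ((1 + p) / N) - p * (q / N) = q / N"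
          using N by (simp add: field_simps)
      qed
    qed
    define U' where "U' = (\<lambda>i (a::nat). if a = 0 then c * U i 0 + s * U i 1 else - s * U i 0 + c * U i 1)"
    have oU': "orthonormal_cols m 2 U'" and ssU': "ss 2 2 r3 (tmult m m n A U' U' W) = ss 2 2 r3 (tmult m m n A U U W)"
      using rot[OF cs oU U'_def] by auto
    have best': "best_sol r3 m n A U' W"
      using best oU' ssU' unfolding best_sol_def tnorm_ss by simp
    have s0: "sg i * U' i 0 = U' i 0" if "i < m" for i
    proof -
      have "sg i * U' i 0 = c * (sg i * U i 0) + s * (sg i * U i 1)" unfolding U'_def by (simp add: algebra_simps)
      also have "\<dots> = U i 0 * (p * c + q * s) + U i 1 * (q * c - p * s)"
        unfolding rel0[OF that] rel1[OF that] rp by (simp add: algebra_simps)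
      also have "\<dots> = U' i 0" using e1 e2 unfolding U'_def by (simp add: algebra_simps)
      finally show ?thesis .
    qed
    have s1: "sg i * U' i 1 = - U' i 1" if "i < m" for i
    proof -
      have "sg i * U' i 1 = - s * (sg i * U i 0) + c * (sg i * U i 1)" unfolding U'_def by (simp add: algebra_simps)
      also have "\<dots> = U i 0 * (q * c - p * s) - U i 1 * (p * c + q * s)"
        unfolding rel0[OF that] rel1[OF that] rp by (simp add: algebra_simps)
      also have "\<dots> = - U' i 1" using e1 e2 unfolding U'_def by (simp add: algebra_simps)
      finally show ?thesis .
    qed
    have z1: "\<forall>i<m1. U' i 1 = 0"
    proof (intro allI impI)
      fix i assume "i < m1"
      then have "U' i 1 = - U' i 1" using s1[of i] dims unfolding sg_def by simp
      then show "U' i 1 = 0" by simp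
    qed
    have z0: "\<forall>i. m1 \<le> i \<and> i < m \<longrightarrow> U' i 0 = 0"
    proof (intro allI impI)
      fix i assume "m1 \<le> i \<and> i < m"
      then have "- U' i 0 = U' i 0" using s0[of i] unfolding sg_def by simp
      then show "U' i 0 = 0" by simp
    qed
    have t: "tmult m m n A U' U' W 0 1 k = 0 \<and> tmult m m n A U' U' W 1 0 k = 0" for k
    proof -
      have t1: "U' i 0 * U' j 1 * W k' k * A i j k' = 0" if "i < m" "j < m" "k' < n" for i j k'
        using z0 z1 A0[of i j k'] that by (cases "i < m1"; cases "j < m1") auto
      have t2: "U' i 1 * U' j 0 * W k' k * A i j k' = 0" if "i < m" "j < m" "k' < n" for i j k'
        using z0 z1 A0[of i j k'] that by (cases "i < m1"; cases "j < m1") auto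
      show ?thesis unfolding tmult_def
        apply (intro conjI sum.neutral ballI)
         apply (rule t1; simp)
        apply (rule t2; simp)
        done
    qed
    show ?thesis using best' z0 z1 t by blast
  qed
qed


end
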